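(* Let $D$ be an integral domain with field of fractions $K$ and let $A$ be a $D$-algebra with standard assumptions. Assume that $A$ is an integral $D$-algebra of bounded degree $n$, i.e. every $a\in A$ satisfies $\mu_a(a)=0$ for some monic $\mu_a\in D[X]$ of degree $n$. Then $\textnormal{Int}_K(M_n(D)) \subseteq \textnormal{Int}_K(A)$, where $M_n(D)$ is the $D$-algebra of $n\times n$ matrices over $D$.
   Context: A $D$-algebra $A$ (not necessarily commutative) satisfies the standard assumptions if it is torsion-free as a $D$-module and $A\cap K = D$, where $A$ and $K$ are identified with their images in $B=K\otimes_D A$ via $a\mapsto 1\otimes a$ and $k\mapsto k\otimes 1$. Polynomials in $K[X]$ are evaluated at elements of $A$ inside $B$. $\textnormal{Int}_K(A)=\{f\in K[X]\mid f(A)\subseteq A\}$. An integral algebra of bounded degree $n$ is one in which each element satisfies a monic polynomial with coefficients in $D$ of degree at most $n$ (equivalently, after multiplying by a power of $X$, of degree exactly $n$). *)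

theory Defs
  imports "HOL-Computational_Algebra.Polynomial" "Jordan_Normal_Form.Matrix"
begin

text \<open>Evaluation of a polynomial with coefficients in K at an element of a ring B,
  where K acts on B through the (central) ring homomorphism phi.\<close>
definition peval :: "('k::comm_ring_1 \<Rightarrow> 'b::ring_1) \<Rightarrow> 'k poly \<Rightarrow> 'b \<Rightarrow> 'b" where
  "peval phi f b = (\<Sum>i\<le>degree f. phi (coeff f i) * b ^ i)"

definition IntK :: "('k::comm_ring_1 \<Rightarrow> 'b::ring_1) \<Rightarrow> 'b set \<Rightarrow> 'k poly set" where
  "IntK phi A = {f. \<forall>a\<in>A. peval phi f a \<in> A}"

definition mat_peval :: "nat \<Rightarrow> 'k::comm_ring_1 poly \<Rightarrow> 'k mat \<Rightarrow> 'k mat" where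
  "mat_peval n f M = foldr (\<lambda>c acc. c \<cdot>\<^sub>m 1\<^sub>m n + M * acc) (coeffs f) (0\<^sub>m n n)"

definition Mn :: "'k set \<Rightarrow> nat \<Rightarrow> 'k mat set" where
  "Mn D n = {M \<in> carrier_mat n n. \<forall>i<n. \<forall>j<n. M $$ (i, j) \<in> D}"

definition IntK_mat :: "'k::comm_ring_1 set \<Rightarrow> nat \<Rightarrow> 'k poly set" where
  "IntK_mat D n = {f. \<forall>M\<in>Mn D n. mat_peval n f M \<in> Mn D n}"

definition is_fraction_field_of :: "'k::field set \<Rightarrow> bool" where
  "is_fraction_field_of D \<longleftrightarrow>
     0 \<in> D \<and> 1 \<in> D \<and> (\<forall>x\<in>D. \<forall>y\<in>D. x + y \<in> D \<and> x - y \<in> D \<and> x * y \<in> D) \<and>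
     (\<forall>k. \<exists>x\<in>D. \<exists>y\<in>D. y \<noteq> 0 \<and> k = x / y)"

definition is_subring :: "'b::ring_1 set \<Rightarrow> bool" where
  "is_subring A \<longleftrightarrow> 0 \<in> A \<and> 1 \<in> A \<and> (\<forall>x\<in>A. \<forall>y\<in>A. x + y \<in> A \<and> x - y \<in> A \<and> x * y \<in> A)"

text \<open>phi : K -> B is a ring homomorphism with central image (B is a K-algebra).\<close>
definition central_hom :: "('k::field \<Rightarrow> 'b::ring_1) \<Rightarrow> bool" where
  "central_hom phi \<longleftrightarrow> phi 1 = 1 \<and> (\<forall>x y. phi (x + y) = phi x + phi y) \<and>
     (\<forall>x y. phi (x * y) = phi x * phi y) \<and> (\<forall>k b. phi k * b = b * phi k)"

definition monic_over :: "'k::comm_ring_1 set \<Rightarrow> 'k poly \<Rightarrow> bool" where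
  "monic_over D p \<longleftrightarrow> lead_coeff p = 1 \<and> (\<forall>i. coeff p i \<in> D)"

end

theory Submission
  imports Defs
begin

lemma ch_basic:
  assumes hom: "central_hom phi"
  shows "phi 0 = 0" "phi (x + y) = phi x + phi y" "phi (x * y) = phi x * phi y"
        "phi k * b = b * phi k" "phi 1 = 1"
proof -
  have "phi (0+0) = phi 0 + phi 0" using hom unfolding central_hom_def by blast
  thus "phi 0 = 0" by simp
qed (use hom in \<open>unfold central_hom_def; blast\<close>)+

lemma peval_ext:
  assumes hom: "central_hom phi" and N: "degree f \<le> N"
  shows "peval phi f b = (\<Sum>i\<le>N. phi (coeff f i) * b ^ i)"
proof -
  have "(\<Sum>i\<le>N. phi (coeff f i) * b ^ i) = (\<Sum>i\<le>degree f. phi (coeff f i) * b ^ i)"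
  proof (rule sum.mono_neutral_right)
    show "\<forall>i\<in>{..N} - {..degree f}. phi (coeff f i) * b ^ i = 0"
      using ch_basic(1)[OF hom] by (auto simp: coeff_eq_0)
  qed (use N in auto)
  thus ?thesis unfolding peval_def by simp
qed

lemma peval_add:
  assumes hom: "central_hom phi"
  shows "peval phi (f + g) b = peval phi f b + peval phi g b"
proof -
  let ?N = "max (degree f) (degree g)"
  have "degree (f+g) \<le> ?N" by (rule degree_add_le) auto
  thus ?thesis using ch_basic(2)[OF hom]
    by (simp add: peval_ext[OF hom, of _ ?N] sum.distrib distrib_right)
qed

lemma peval_smult:
  assumes hom: "central_hom phi"
  shows "peval phi (Polynomial.smult c f) b = phi c * peval phi f b"
proof -
  have "degree (Polynomial.smult c f) \<le> degree f" by simp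
  thus ?thesis using ch_basic(3)[OF hom]
    by (simp add: peval_ext[OF hom, of _ "degree f"] sum_distrib_left mult.assoc)
qed

lemma peval_pCons:
  assumes hom: "central_hom phi"
  shows "peval phi (pCons c p) b = phi c + b * peval phi p b"
proof -
  have "degree (pCons c p) \<le> Suc (degree p)" by simp
  hence "peval phi (pCons c p) b = (\<Sum>i\<le>Suc (degree p). phi (coeff (pCons c p) i) * b ^ i)"
    by (rule peval_ext[OF hom])
  also have "\<dots> = phi c + (\<Sum>i\<le>degree p. phi (coeff p i) * b ^ Suc i)"
    by (simp del: sum.atMost_Suc add: sum.atMost_Suc_shift)
  also have "(\<Sum>i\<le>degree p. phi (coeff p i) * b ^ Suc i) = (\<Sum>i\<le>degree p. b * (phi (coeff p i) * b ^ i))"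
  proof (rule sum.cong)
    fix i
    have "phi (coeff p i) * b ^ Suc i = (phi (coeff p i) * b) * b ^ i" by (simp add: mult.assoc)
    also have "\<dots> = b * (phi (coeff p i) * b ^ i)" by (simp only: ch_basic(4)[OF hom] mult.assoc)
    finally show "phi (coeff p i) * b ^ Suc i = b * (phi (coeff p i) * b ^ i)" .
  qed simp
  also have "\<dots> = b * peval phi p b" by (simp add: peval_def sum_distrib_left)
  finally show ?thesis .
qed

lemma peval_mult:
  assumes hom: "central_hom phi"
  shows "peval phi (p * q) b = peval phi p b * peval phi q b"
proof (induction p)
  case 0
  then show ?case by (simp add: peval_def ch_basic(1)[OF hom])
next
  case (pCons a p)
  have e: "peval phi (pCons 0 r) b = b * peval phi r b" for r
    using peval_pCons[OF hom] ch_basic(1)[OF hom] by simp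
  show ?case
    by (simp add: peval_add[OF hom] peval_smult[OF hom] e pCons.IH peval_pCons[OF hom] distrib_right mult.assoc ch_basic(1)[OF hom])
qed


lemma foldr_carrier:
  assumes "M \<in> carrier_mat n n"
  shows "foldr (\<lambda>c acc. c \<cdot>\<^sub>m 1\<^sub>m n + M * acc) xs (0\<^sub>m n n) \<in> carrier_mat n n"
  using assms by (induction xs) auto

lemma mat_peval_carrier:
  assumes "M \<in> carrier_mat n n" shows "mat_peval n f M \<in> carrier_mat n n"
  unfolding mat_peval_def by (rule foldr_carrier[OF assms])

lemma mat_peval_0: "mat_peval n 0 M = 0\<^sub>m n n"
  unfolding mat_peval_def by simp

lemma mat_peval_pCons:
  assumes M: "M \<in> carrier_mat n n"
  shows "mat_peval n (pCons c f) M = c \<cdot>\<^sub>m 1\<^sub>m n + M * mat_peval n f M"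
proof (cases "f = 0 \<and> c = 0")
  case True
  have "(0::'a) \<cdot>\<^sub>m 1\<^sub>m n + M * 0\<^sub>m n n = 0\<^sub>m n n"
    using M by (intro eq_matI) auto
  with True show ?thesis by (simp add: mat_peval_def)
next
  case False
  hence "coeffs (pCons c f) = c # coeffs f" by (auto simp: cCons_def)
  thus ?thesis by (simp add: mat_peval_def)
qed

definition compm :: "nat \<Rightarrow> 'k::comm_ring_1 poly \<Rightarrow> 'k mat" where
  "compm n m = mat n n (\<lambda>(i,j). (if i = Suc j then 1 else 0) - (if j = n - 1 then coeff m i else 0))"

lemma compm_carrier: "compm n m \<in> carrier_mat n n" by (simp add: compm_def)

lemma entry_step:
  assumes P: "P \<in> carrier_mat n n" and i: "i < n"
  shows "(c \<cdot>\<^sub>m 1\<^sub>m n + compm n m * P) $$ (i,0) =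
     (if i = 0 then c else 0) + ((if i > 0 then P $$ (i - 1, 0) else 0) - coeff m i * P $$ (n - 1, 0))"
proof -
  have n: "0 < n" using i by simp
  have "(compm n m * P) $$ (i,0) = (\<Sum>j<n. compm n m $$ (i,j) * P $$ (j,0))"
    using P i n by (simp add: compm_def scalar_prod_def atLeast0LessThan)
  also have "\<dots> = (\<Sum>j<n. (if i = Suc j then P $$ (j,0) else 0)) - (\<Sum>j<n. if j = n - 1 then coeff m i * P $$ (j,0) else 0)"
    using i by (subst sum_subtractf[symmetric], intro sum.cong) (auto simp: compm_def left_diff_distrib)
  also have "(\<Sum>j<n. if j = n - 1 then coeff m i * P $$ (j,0) else 0) = coeff m i * P $$ (n - 1, 0)"
    using n by (simp add: sum.delta')
  also have "(\<Sum>j<n. (if i = Suc j then P $$ (j,0) else 0)) = (if i > 0 then P $$ (i - 1, 0) else 0)"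
  proof (cases i)
    case 0 then show ?thesis by simp
  next
    case (Suc k)
    have "(\<Sum>j<n. (if i = Suc j then P $$ (j,0) else 0)) = (\<Sum>j<n. (if j = k then P $$ (j,0) else 0))"
      using Suc by (intro sum.cong) auto
    also have "\<dots> = P $$ (k,0)" using Suc i by (simp add: sum.delta')
    finally show ?thesis using Suc by simp
  qed
  finally have e: "(compm n m * P) $$ (i,0) = (if i > 0 then P $$ (i - 1, 0) else 0) - coeff m i * P $$ (n - 1, 0)" .
  have "(c \<cdot>\<^sub>m 1\<^sub>m n + compm n m * P) $$ (i,0) = c * (1\<^sub>m n) $$ (i,0) + (compm n m * P) $$ (i,0)"
    using P i n by (simp add: compm_def)
  also have "c * (1\<^sub>m n) $$ (i,0) = (if i = 0 then c else 0)" using i n by simp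
  finally show ?thesis using e by simp
qed


lemma mod_step:
  fixes m :: "'k::field poly"
  assumes m1: "lead_coeff m = 1" and dm: "degree m = n" and n: "0 < n"
  shows "(pCons c f) mod m = pCons c (f mod m) - Polynomial.smult (coeff (f mod m) (n - 1)) m"
proof -
  define p where "p = f mod m"
  define d where "d = coeff p (n - 1)"
  define r where "r = pCons c p - Polynomial.smult d m"
  have m0: "m \<noteq> 0" using m1 by auto
  have dp: "degree p < n"
    using degree_mod_less[OF m0, of f] dm n by (auto simp: p_def)
  have "degree r \<le> n - 1"
  proof (rule degree_le, intro allI impI)
    fix k assume k: "n - 1 < k"
    then obtain k' where k': "k = Suc k'" by (cases k) auto
    show "coeff r k = 0"
    proof (cases "k = n")
      case True
      have "coeff m n = 1" using m1 dm by simp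
      with True k' show ?thesis by (auto simp: r_def d_def)
    next
      case False
      hence "k > n" "k' \<ge> n" using k k' by auto
      hence "coeff p k' = 0" "coeff m k = 0" using dp dm by (auto simp: coeff_eq_0)
      thus ?thesis using k' by (simp add: r_def)
    qed
  qed
  hence dr: "degree r < degree m" using n dm by simp
  have "pCons c f = r + (pCons 0 (f div m) + [:d:]) * m"
  proof -
    have "pCons c f = pCons c (f div m * m + p)" by (simp add: p_def)
    also have "\<dots> = pCons c p + pCons 0 (f div m * m)"
      by simp
    also have "\<dots> = r + (pCons 0 (f div m) + [:d:]) * m"
      by (simp add: r_def algebra_simps)
    finally show ?thesis .
  qed
  hence "(pCons c f) mod m = r mod m" by (simp only: mod_mult_self1)
  also have "\<dots> = r" by (rule mod_poly_less[OF dr])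
  finally show ?thesis by (simp add: r_def d_def p_def)
qed

lemma comp_inv:
  fixes m :: "'k::field poly"
  assumes m1: "lead_coeff m = 1" and dm: "degree m = n" and n: "0 < n"
  shows "\<forall>i<n. mat_peval n f (compm n m) $$ (i,0) = coeff (f mod m) i"
proof (induction f)
  case 0
  then show ?case by (simp add: mat_peval_0)
next
  case (pCons c f)
  show ?case
  proof (intro allI impI)
    fix i assume i: "i < n"
    let ?P = "mat_peval n f (compm n m)"
    have P: "?P \<in> carrier_mat n n" by (rule mat_peval_carrier[OF compm_carrier])
    have "mat_peval n (pCons c f) (compm n m) $$ (i,0) =
       (if i = 0 then c else 0) + ((if i > 0 then ?P $$ (i - 1, 0) else 0) - coeff m i * ?P $$ (n - 1, 0))"
      by (simp add: mat_peval_pCons[OF compm_carrier] entry_step[OF P i])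
    also have "\<dots> = (if i = 0 then c else 0) + ((if i > 0 then coeff (f mod m) (i - 1) else 0) - coeff m i * coeff (f mod m) (n - 1))"
      using pCons.IH i n by simp
    also have "\<dots> = coeff ((pCons c f) mod m) i"
      by (cases i) (auto simp: mod_step[OF m1 dm n] mult.commute)
    finally show "mat_peval n (pCons c f) (compm n m) $$ (i,0) = coeff ((pCons c f) mod m) i" .
  qed
qed


lemma subring_pow: "is_subring A \<Longrightarrow> a \<in> A \<Longrightarrow> a ^ i \<in> A"
  by (induction i) (auto simp: is_subring_def)

lemma subring_sum:
  assumes "is_subring A" "\<And>i. i \<in> S \<Longrightarrow> g i \<in> A" "finite S" shows "sum g S \<in> A"
  using assms(3,2) by (induction S rule: finite_induct) (use assms(1) in \<open>auto simp: is_subring_def\<close>)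

theorem mainTheorem1:
  fixes D :: "'k::field set" and phi :: "'k \<Rightarrow> 'b::ring_1" and A :: "'b set" and n :: nat
  assumes frac: "is_fraction_field_of D"
    and hom: "central_hom phi"
    and subA: "is_subring A"
    and alg: "phi ` D \<subseteq> A"
    and tensor: "\<forall>b. \<exists>k a. a \<in> A \<and> b = phi k * a"
    and std: "A \<inter> range phi = phi ` D"
    and integral: "\<forall>a\<in>A. \<exists>\<mu>. monic_over D \<mu> \<and> degree \<mu> = n \<and> peval phi \<mu> a = 0"
  shows "IntK_mat D n \<subseteq> IntK phi A"
proof
  fix f assume f: "f \<in> IntK_mat D n"
  show "f \<in> IntK phi A"
    unfolding IntK_def
  proof (intro CollectI ballI)
    fix a assume a: "a \<in> A"
    obtain m where mo: "monic_over D m" and dm: "degree m = n" and ma: "peval phi m a = 0"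
      using integral a by blast
    have m1: "lead_coeff m = 1" and mD: "\<And>i. coeff m i \<in> D" using mo by (auto simp: monic_over_def)
    have m0: "m \<noteq> 0" using m1 by auto
    have D0: "0 \<in> D" and D1: "1 \<in> D" and Dsub: "\<And>x y. x \<in> D \<Longrightarrow> y \<in> D \<Longrightarrow> x - y \<in> D"
      using frac by (auto simp: is_fraction_field_of_def)
    define r where "r = f mod m"
    have rD: "coeff r i \<in> D" for i
    proof (cases "i < n")
      case True
      hence n: "0 < n" by simp
      have ent: "(if i' = Suc j then 1 else 0) - (if j = n - 1 then coeff m i' else 0) \<in> D" for i' j
        by (rule Dsub) (use D0 D1 mD in auto)
      have "compm n m \<in> Mn D n"
        unfolding Mn_def using ent by (auto simp: compm_def)
      hence "mat_peval n f (compm n m) \<in> Mn D n" using f by (auto simp: IntK_mat_def)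
      hence "mat_peval n f (compm n m) $$ (i,0) \<in> D" using True n by (auto simp: Mn_def)
      thus ?thesis using comp_inv[OF m1 dm n] True by (simp add: r_def)
    next
      case False
      have "r = 0 \<or> degree r < n" using degree_mod_less[OF m0, of f] dm by (simp add: r_def)
      hence "coeff r i = 0" using False by (auto simp: coeff_eq_0)
      thus ?thesis using D0 by simp
    qed
    have "peval phi f a = peval phi (f div m * m + r) a" by (simp add: r_def)
    also have "\<dots> = peval phi r a"
      by (simp add: peval_add[OF hom] peval_mult[OF hom] ma)
    also have "\<dots> \<in> A"
      unfolding peval_def
    proof (rule subring_sum[OF subA])
      fix i
      have "phi (coeff r i) \<in> A" using alg rD by blast
      moreover have "a ^ i \<in> A" by (rule subring_pow[OF subA a])
      ultimately show "phi (coeff r i) * a ^ i \<in> A" using subA by (auto simp: is_subring_def)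
    qed simp
    finally show "peval phi f a \<in> A" .
  qed
qed

end
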